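(* Let $K$ be a field equipped with a field endomorphism $\sigma$, and for a matrix $E$ over $K$ and $j\in\mathbb{N}$ let $E^{(j)}$ denote $E$ with $\sigma^j$ applied entrywise. Let $E_1,\ldots,E_t\in K^{p\times q}$ with $t\ge1$. For $k\ge1$ let $N_k$ be the $k\times k$ block matrix (blocks of size $p\times q$) whose block in block row $a$ and block column $b$ ($0\le a,b\le k-1$) is $E_{a-b+1}^{(a)}$ if $0\le a-b\le t-1$ and zero otherwise; i.e. \[N_k=\begin{pmatrix} E_1&&&&&\\ E_2^{(1)}&E_1^{(1)}&&&&\\ \vdots&\vdots&\ddots&&&\\ E_t^{(t-1)}&E_{t-1}^{(t-1)}&\cdots&E_1^{(t-1)}&&\\ &\ddots&\ddots&\ddots&\ddots&\\ &&E_t^{(k-1)}&E_{t-1}^{(k-1)}&\cdots&E_1^{(k-1)} \end{pmatrix}.\] Then there exist $d'\in\mathbb{N}$ and $a'\in\mathbb{Z}$ such that $\operatorname{rank}_K(N_k)=d'k+a'$ for all sufficiently large $k$. Moreover, the least $k_0$ such that this equality holds for all $k\ge k_0$ is at most $(t-1)(\min\{p,q\}+2)$. *)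

theory Defs
  imports "Jordan_Normal_Form.DL_Rank"
begin

definition field_endo :: "('a::field \<Rightarrow> 'a) \<Rightarrow> bool" where
  "field_endo \<sigma> \<longleftrightarrow> \<sigma> 1 = 1 \<and> (\<forall>x y. \<sigma> (x + y) = \<sigma> x + \<sigma> y) \<and> (\<forall>x y. \<sigma> (x * y) = \<sigma> x * \<sigma> y)"

definition mat_rank :: "'a::field mat \<Rightarrow> nat" where
  "mat_rank A = vec_space.rank (dim_row A) A"

definition twist :: "('a \<Rightarrow> 'a) \<Rightarrow> nat \<Rightarrow> 'a mat \<Rightarrow> 'a mat" where
  "twist \<sigma> j E = map_mat (\<sigma> ^^ j) E"

definition Nmat :: "('a::field \<Rightarrow> 'a) \<Rightarrow> (nat \<Rightarrow> 'a mat) \<Rightarrow> nat \<Rightarrow> nat \<Rightarrow> nat \<Rightarrow> nat \<Rightarrow> 'a mat" where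
  "Nmat \<sigma> E t p q k = mat (k * p) (k * q) (\<lambda>(i, j).
     (let a = i div p; b = j div q in
      if b \<le> a \<and> a - b \<le> t - 1 then twist \<sigma> a (E (a - b + 1)) $$ (i mod p, j mod q) else 0))"

end

theory Submission
  imports Defs "HOL-Library.Function_Algebras"
begin

interpretation fv: vector_space "(\<lambda>c f i. c * f i) :: 'a::field \<Rightarrow> (nat \<Rightarrow> 'a) \<Rightarrow> nat \<Rightarrow> 'a"
  by unfold_locales (auto simp: algebra_simps fun_eq_iff)

interpretation fvp: vector_space_pair "(\<lambda>c f i. c * f i) :: 'a::field \<Rightarrow> (nat \<Rightarrow> 'a) \<Rightarrow> nat \<Rightarrow> 'a"
   "(\<lambda>c f i. c * f i) :: 'a::field \<Rightarrow> (nat \<Rightarrow> 'a) \<Rightarrow> nat \<Rightarrow> 'a"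
  by unfold_locales

lemma sum_fun_apply: "(\<Sum>x\<in>S. f x) i = (\<Sum>x\<in>S. f x i)"
  by (induction S rule: infinite_finite_induct) auto

lemma fv_basis:
  fixes S :: "(nat \<Rightarrow> 'a::field) set"
  assumes "finite S"
  obtains B where "B \<subseteq> S" "fv.independent B" "S \<subseteq> fv.span B" "card B = fv.dim S" "finite B"
proof -
  obtain B where B: "B \<subseteq> S" "fv.independent B" "S \<subseteq> fv.span B"
    using fv.maximal_independent_subset by blast
  have "card B = fv.dim S" using fv.basis_card_eq_dim[OF B(1) B(3) B(2)] .
  then show ?thesis using that B finite_subset[OF B(1) assms] by blast
qed

lemma fv_dim_le_card: "finite (S :: (nat \<Rightarrow> 'a::field) set) \<Longrightarrow> fv.dim S \<le> card S"
  using fv.dim_le_card[of S S] fv.span_superset by blast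

lemma fv_dim_mono:
  fixes S T :: "(nat \<Rightarrow> 'a::field) set"
  assumes "finite T" "S \<subseteq> fv.span T"
  shows "fv.dim S \<le> fv.dim T"
proof -
  obtain B where B: "B \<subseteq> T" "fv.independent B" "T \<subseteq> fv.span B" "card B = fv.dim T" "finite B"
    using fv_basis[OF assms(1)] by blast
  have "fv.span T \<subseteq> fv.span B" by (rule fv.span_minimal[OF B(3) fv.subspace_span])
  then have "S \<subseteq> fv.span B" using assms(2) by (rule subset_trans[rotated])
  then show ?thesis using fv.dim_le_card[OF _ B(5)] B(4) by auto
qed

lemma fv_dim_union:
  fixes S T :: "(nat \<Rightarrow> 'a::field) set"
  assumes "finite S" "finite T"
  shows "fv.dim (S \<union> T) \<le> fv.dim S + fv.dim T"
proof -
  obtain B where B: "B \<subseteq> S" "fv.independent B" "S \<subseteq> fv.span B" "card B = fv.dim S" "finite B"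
    using fv_basis[OF assms(1)] by blast
  obtain C where C: "C \<subseteq> T" "fv.independent C" "T \<subseteq> fv.span C" "card C = fv.dim T" "finite C"
    using fv_basis[OF assms(2)] by blast
  have "S \<union> T \<subseteq> fv.span (B \<union> C)"
    using B(3) C(3) fv.span_mono[of B "B \<union> C"] fv.span_mono[of C "B \<union> C"] by blast
  then have "fv.dim (S \<union> T) \<le> card (B \<union> C)" using fv.dim_le_card B(5) C(5) by blast
  also have "\<dots> \<le> card B + card C" by (rule card_Un_le)
  finally show ?thesis using B(4) C(4) by simp
qed

lemma fv_dim_image_le:
  fixes S :: "(nat \<Rightarrow> 'a::field) set"
  assumes lin: "Vector_Spaces.linear (\<lambda>c f i. c * f i) (\<lambda>c f i. c * f i) P" and "finite S"
  shows "fv.dim (P ` S) \<le> fv.dim S"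
proof -
  obtain B where B: "B \<subseteq> S" "fv.independent B" "S \<subseteq> fv.span B" "card B = fv.dim S" "finite B"
    using fv_basis[OF assms(2)] by blast
  have "P ` S \<subseteq> fv.span (P ` B)"
    using fvp.linear_span_image[OF lin, of B] B(3) by blast
  then have "fv.dim (P ` S) \<le> card (P ` B)" using fv.dim_le_card B(5) by blast
  also have "\<dots> \<le> card B" using B(5) card_image_le by blast
  finally show ?thesis using B(4) by simp
qed

lemma fv_dim_image_eq:
  fixes S :: "(nat \<Rightarrow> 'a::field) set"
  assumes lin: "Vector_Spaces.linear (\<lambda>c f i. c * f i) (\<lambda>c f i. c * f i) P" and "finite S"
    and inj: "inj_on P (fv.span S)"
  shows "fv.dim (P ` S) = fv.dim S"
proof -
  obtain B where B: "B \<subseteq> S" "fv.independent B" "S \<subseteq> fv.span B" "card B = fv.dim S" "finite B"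
    using fv_basis[OF assms(2)] by blast
  have sp: "fv.span B \<subseteq> fv.span S" using B(1) fv.span_mono by blast
  have ind: "fv.independent (P ` B)"
    using fvp.linear_independent_injective_image[OF lin B(2)] inj_on_subset[OF inj sp] by blast
  have "P ` S \<subseteq> fv.span (P ` B)"
    using fvp.linear_span_image[OF lin, of B] B(3) by blast
  moreover have "P ` B \<subseteq> P ` S" using B(1) by (rule image_mono)
  ultimately have "card (P ` B) = fv.dim (P ` S)"
    using fv.basis_card_eq_dim[of "P ` B" "P ` S"] ind by simp
  moreover have "card (P ` B) = card B"
  proof -
    have "B \<subseteq> fv.span S" using B(1) fv.span_superset by blast
    then show ?thesis by (rule card_image[OF inj_on_subset[OF inj]])
  qed
  ultimately show ?thesis using B(4) by linarith
qed

lemma fv_F3: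
  fixes S S0 :: "(nat \<Rightarrow> 'a::field) set"
  assumes lin: "Vector_Spaces.linear (\<lambda>c f i. c * f i) (\<lambda>c f i. c * f i) P" and "finite S0" "S \<subseteq> S0"
  shows "fv.dim (P ` S0) + fv.dim S \<le> fv.dim S0 + fv.dim (P ` S)"
proof -
  have finS: "finite S" using assms finite_subset by blast
  obtain B where B: "B \<subseteq> S" "fv.independent B" "S \<subseteq> fv.span B" "card B = fv.dim S" "finite B"
    using fv_basis[OF finS] by blast
  obtain B0 where B0: "B \<subseteq> B0" "B0 \<subseteq> S0" "fv.independent B0" "S0 \<subseteq> fv.span B0"
    using fv.maximal_independent_subset_extend[of B S0] B(1,2) assms(3) by blast
  have fB0: "finite B0" using B0(2) assms(2) finite_subset by blast
  have cB0: "card B0 = fv.dim S0" using fv.basis_card_eq_dim[OF B0(2) B0(4) B0(3)] .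
  have s1: "P ` S0 \<subseteq> fv.span (P ` B0)"
    unfolding fvp.linear_span_image[OF lin, of B0] using B0(4) by (rule image_mono)
  have s2: "P ` B0 = P ` B \<union> P ` (B0 - B)" using B0(1) by auto
  have fU: "finite (P ` B \<union> P ` (B0 - B))" using fB0 B(5) by simp
  have d1: "fv.dim (P ` S0) \<le> fv.dim (P ` B \<union> P ` (B0 - B))"
    by (rule fv_dim_mono[OF fU]) (use s1 s2 in simp)
  have d2: "fv.dim (P ` B \<union> P ` (B0 - B)) \<le> fv.dim (P ` B) + fv.dim (P ` (B0 - B))"
    by (rule fv_dim_union) (use fB0 B(5) in simp_all)
  have "P ` B \<subseteq> P ` S" using B(1) by (rule image_mono)
  then have "P ` B \<subseteq> fv.span (P ` S)" using fv.span_superset by (rule subset_trans)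
  then have d3: "fv.dim (P ` B) \<le> fv.dim (P ` S)"
    by (rule fv_dim_mono[rotated]) (use finS in simp)
  have d4: "fv.dim (P ` (B0 - B)) \<le> card (B0 - B)"
    using fv_dim_le_card[of "P ` (B0 - B)"] card_image_le[of "B0 - B" P] fB0 by simp
  have d5: "card (B0 - B) = card B0 - card B" using card_Diff_subset B(5) B0(1) by blast
  show ?thesis using d1 d2 d3 d4 d5 cB0 B(4) card_mono[OF fB0 B0(1)] by linarith
qed

lemma fe_0: "field_endo \<sigma> \<Longrightarrow> \<sigma> 0 = 0"
  unfolding field_endo_def by (metis add_cancel_right_right add_0)

lemma fe_add: "field_endo \<sigma> \<Longrightarrow> \<sigma> (x + y) = \<sigma> x + \<sigma> y"
  unfolding field_endo_def by blast

lemma fe_mult: "field_endo \<sigma> \<Longrightarrow> \<sigma> (x * y) = \<sigma> x * \<sigma> y"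
  unfolding field_endo_def by blast

lemma fe_one: "field_endo \<sigma> \<Longrightarrow> \<sigma> 1 = 1"
  unfolding field_endo_def by blast

lemma fe_neg: "field_endo \<sigma> \<Longrightarrow> \<sigma> (- x) = - \<sigma> x"
  using fe_add[of \<sigma> x "-x"] fe_0[of \<sigma>] by (simp add: add.commute eq_neg_iff_add_eq_0)

lemma fe_diff: "field_endo \<sigma> \<Longrightarrow> \<sigma> (x - y) = \<sigma> x - \<sigma> y"
  using fe_add[of \<sigma> x "-y"] fe_neg[of \<sigma> y] by simp

lemma fe_nz:
  fixes x :: "'a::field"
  shows "field_endo \<sigma> \<Longrightarrow> x \<noteq> 0 \<Longrightarrow> \<sigma> x \<noteq> 0"
  using fe_mult[of \<sigma> x "inverse x"] fe_one[of \<sigma>] by auto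

lemma fe_inj:
  fixes x :: "'a::field"
  shows "field_endo \<sigma> \<Longrightarrow> \<sigma> x = \<sigma> y \<Longrightarrow> x = y"
  using fe_nz[of \<sigma> "x - y"] fe_diff[of \<sigma> x y] by auto

lemma fe_sum: "field_endo \<sigma> \<Longrightarrow> \<sigma> (\<Sum>x\<in>A. f x) = (\<Sum>x\<in>A. \<sigma> (f x))"
  by (induction A rule: infinite_finite_induct) (auto simp: fe_0 fe_add)

lemma fe_pow: "field_endo \<sigma> \<Longrightarrow> field_endo (\<sigma> ^^ n)"
  by (induction n) (auto simp: field_endo_def)

definition findep :: "nat \<Rightarrow> (nat \<Rightarrow> nat \<Rightarrow> 'a::field) \<Rightarrow> bool" where
  "findep r v \<longleftrightarrow> (\<forall>a. (\<forall>i. (\<Sum>j<r. a j * v j i) = 0) \<longrightarrow> (\<forall>j<r. a j = 0))"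

lemma findep_twist:
  fixes v :: "nat \<Rightarrow> nat \<Rightarrow> 'a::field"
  assumes fe: "field_endo \<sigma>"
  shows "findep r v \<Longrightarrow> findep r (\<lambda>j i. \<sigma> (v j i))"
proof (induction r arbitrary: v)
  case 0
  then show ?case by (simp add: findep_def)
next
  case (Suc r)
  define w where "w = v r"
  obtain i0 where i0: "w i0 \<noteq> 0"
  proof (rule ccontr)
    assume "\<not> thesis"
    then have z: "\<And>i. w i = 0" using that by blast
    define a where "a = (\<lambda>j::nat. if j = r then (1::'a) else 0)"
    have "\<forall>i. (\<Sum>j<Suc r. a j * v j i) = 0"
      using z unfolding a_def w_def by simp
    then have "a r = 0" using Suc.prems unfolding findep_def by blast
    then show False unfolding a_def by simp
  qed
  define u where "u = (\<lambda>j i. w i0 * v j i - v j i0 * w i)"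
  have "findep r u"
    unfolding findep_def
  proof (intro allI impI)
    fix a j assume H: "\<forall>i. (\<Sum>j<r. a j * u j i) = 0" and j: "j < r"
    define a' where "a' = (\<lambda>j. if j < r then a j * w i0 else - (\<Sum>j<r. a j * v j i0))"
    have "\<forall>i. (\<Sum>j<Suc r. a' j * v j i) = 0"
    proof
      fix i
      have "(\<Sum>j<Suc r. a' j * v j i) = (\<Sum>j<r. a j * w i0 * v j i) - (\<Sum>j<r. a j * v j i0) * w i"
        unfolding a'_def w_def by simp
      also have "\<dots> = (\<Sum>j<r. a j * u j i)"
        unfolding u_def by (simp add: sum_distrib_left sum_distrib_right sum_subtractf algebra_simps)
      finally show "(\<Sum>j<Suc r. a' j * v j i) = 0" using H by simp
    qed
    then have "\<forall>j<Suc r. a' j = 0" using Suc.prems unfolding findep_def by blast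
    then have "a' j = 0" using j by simp
    then show "a j = 0" using j i0 unfolding a'_def by simp
  qed
  then have IH: "findep r (\<lambda>j i. \<sigma> (u j i))" by (rule Suc.IH)
  show ?case
    unfolding findep_def
  proof (intro allI impI)
    fix b j assume H: "\<forall>i. (\<Sum>j<Suc r. b j * \<sigma> (v j i)) = 0" and j: "j < Suc r"
    define c where "c = (\<Sum>j<r. b j * \<sigma> (v j i0)) + b r * \<sigma> (w i0)"
    have su: "\<And>j i. \<sigma> (u j i) = \<sigma> (w i0) * \<sigma> (v j i) - \<sigma> (v j i0) * \<sigma> (w i)"
      unfolding u_def using fe by (simp add: fe_diff fe_mult)
    have key: "(\<Sum>j<r. b j * \<sigma> (u j i)) + c * \<sigma> (w i) = \<sigma> (w i0) * (\<Sum>j<Suc r. b j * \<sigma> (v j i))" for i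
      unfolding su c_def w_def
      by (simp add: sum_distrib_left sum_distrib_right sum_subtractf algebra_simps)
    have key0: "(\<Sum>j<r. b j * \<sigma> (u j i)) + c * \<sigma> (w i) = 0" for i
      using key H by simp
    have "\<sigma> (u j i0) = 0" for j unfolding u_def by (simp add: fe fe_0)
    then have "c * \<sigma> (w i0) = 0" using key0[of i0] by simp
    then have c0: "c = 0" using fe_nz[OF fe i0] by simp
    then have "\<forall>i. (\<Sum>j<r. b j * \<sigma> (u j i)) = 0" using key0 by simp
    then have bj: "\<forall>j<r. b j = 0" using IH unfolding findep_def by blast
    then have "b r * \<sigma> (w i0) = 0" using c0 unfolding c_def by simp
    then have "b r = 0" using fe_nz[OF fe i0] by simp
    then show "b j = 0" using bj j less_Suc_eq by auto
  qed
qed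

lemma fv_indep_iff:
  fixes B :: "(nat \<Rightarrow> 'a::field) set"
  assumes "finite B"
  shows "fv.independent B \<longleftrightarrow> (\<forall>u. (\<forall>i. (\<Sum>x\<in>B. u x * x i) = 0) \<longrightarrow> (\<forall>x\<in>B. u x = 0))"
proof -
  have e: "((\<Sum>x\<in>B. (\<lambda>i. u x * x i)) = 0) \<longleftrightarrow> (\<forall>i. (\<Sum>x\<in>B. u x * x i) = 0)" for u
    by (simp add: fun_eq_iff sum_fun_apply)
  show ?thesis using fv.dependent_finite[OF assms] e by blast
qed

definition twv :: "('a \<Rightarrow> 'a) \<Rightarrow> (nat \<Rightarrow> 'a) \<Rightarrow> nat \<Rightarrow> 'a" where
  "twv \<sigma> x = (\<lambda>i. \<sigma> (x i))"

lemma twv_inj: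
  fixes \<sigma> :: "'a::field \<Rightarrow> 'a"
  assumes "field_endo \<sigma>" shows "inj (twv \<sigma>)"
  using fe_inj[OF assms] unfolding inj_def twv_def fun_eq_iff by blast

lemma indep_twist:
  fixes B :: "(nat \<Rightarrow> 'a::field) set"
  assumes fe: "field_endo \<sigma>" and fin: "finite B" and ind: "fv.independent B"
  shows "fv.independent (twv \<sigma> ` B)"
proof -
  define n where "n = card B"
  obtain e where e: "bij_betw e {..<n} B"
    using ex_bij_betw_nat_finite[OF fin] unfolding n_def atLeast0LessThan by blast
  have "findep n e"
    unfolding findep_def
  proof (intro allI impI)
    fix a j assume H: "\<forall>i. (\<Sum>j<n. a j * e j i) = 0" and j: "j < n"
    define u where "u x = a (inv_into {..<n} e x)" for x
    have "(\<Sum>x\<in>B. u x * x i) = 0" for i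
    proof -
      have "(\<Sum>x\<in>B. u x * x i) = (\<Sum>j<n. u (e j) * e j i)"
        using sum.reindex_bij_betw[OF e, of "\<lambda>x. u x * x i"] by simp
      also have "\<dots> = (\<Sum>j<n. a j * e j i)"
        by (rule sum.cong) (auto simp: u_def bij_betw_inv_into_left[OF e])
      finally show ?thesis using H by simp
    qed
    then have "\<forall>x\<in>B. u x = 0" using ind fv_indep_iff[OF fin] by blast
    then have "u (e j) = 0" using j bij_betwE[OF e] by blast
    then show "a j = 0" using j by (simp add: u_def bij_betw_inv_into_left[OF e])
  qed
  then have tw: "findep n (\<lambda>j i. \<sigma> (e j i))" by (rule findep_twist[OF fe])
  have fin2: "finite (twv \<sigma> ` B)" using fin by simp
  have e2: "bij_betw (\<lambda>j. twv \<sigma> (e j)) {..<n} (twv \<sigma> ` B)"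
    using bij_betw_trans[OF e, of "twv \<sigma>"] twv_inj[OF fe] inj_on_subset
    unfolding comp_def by (metis bij_betw_imageI subset_UNIV)
  show ?thesis
    unfolding fv_indep_iff[OF fin2]
  proof (intro allI impI ballI)
    fix u y assume H: "\<forall>i. (\<Sum>x\<in>twv \<sigma> ` B. u x * x i) = 0" and y: "y \<in> twv \<sigma> ` B"
    have zz: "\<forall>i. (\<Sum>j<n. u (twv \<sigma> (e j)) * \<sigma> (e j i)) = 0"
    proof
      fix i
      have "(\<Sum>x\<in>twv \<sigma> ` B. u x * x i) = (\<Sum>j<n. u (twv \<sigma> (e j)) * twv \<sigma> (e j) i)"
        using sum.reindex_bij_betw[OF e2, of "\<lambda>x. u x * x i"] by simp
      then show "(\<Sum>j<n. u (twv \<sigma> (e j)) * \<sigma> (e j i)) = 0" using H by (simp add: twv_def)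
    qed
    define a where "a = (\<lambda>j. u (twv \<sigma> (e j)))"
    have zz': "\<forall>i. (\<Sum>j<n. a j * \<sigma> (e j i)) = 0" using zz unfolding a_def .
    have "\<forall>j<n. a j = 0" using tw zz' unfolding findep_def by blast
    then have z: "\<forall>j<n. u (twv \<sigma> (e j)) = 0" unfolding a_def .
    have "B = e ` {..<n}" using bij_betw_imp_surj_on[OF e] by simp
    then obtain j where "j < n" "y = twv \<sigma> (e j)" using y by blast
    then show "u y = 0" using z by simp
  qed
qed

lemma dep_twist:
  fixes B :: "(nat \<Rightarrow> 'a::field) set"
  assumes fe: "field_endo \<sigma>" and fin: "finite B" and dep: "fv.dependent B"
  shows "fv.dependent (twv \<sigma> ` B)"
proof -
  obtain u x where x: "x \<in> B" "u x \<noteq> 0" and H: "\<forall>i. (\<Sum>x\<in>B. u x * x i) = 0"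
    using dep fv_indep_iff[OF fin] by blast
  have inj: "inj_on (twv \<sigma>) B" using twv_inj[OF fe] inj_on_subset by blast
  define u' where "u' y = \<sigma> (u (inv_into B (twv \<sigma>) y))" for y
  have "(\<Sum>y\<in>twv \<sigma> ` B. u' y * y i) = 0" for i
  proof -
    have "(\<Sum>y\<in>twv \<sigma> ` B. u' y * y i) = (\<Sum>x\<in>B. u' (twv \<sigma> x) * twv \<sigma> x i)"
      using sum.reindex[OF inj, of "\<lambda>y. u' y * y i"] by simp
    also have "\<dots> = (\<Sum>x\<in>B. \<sigma> (u x) * \<sigma> (x i))"
      apply (rule sum.cong, rule refl)
      apply (subst u'_def, subst inv_into_f_f[OF inj], assumption)
      apply (simp add: twv_def)
      done
    also have "\<dots> = \<sigma> (\<Sum>x\<in>B. u x * x i)" by (simp add: fe_sum[OF fe] fe_mult[OF fe])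
    finally show ?thesis using H fe_0[OF fe] by simp
  qed
  moreover have "u' (twv \<sigma> x) \<noteq> 0" using x fe_nz[OF fe] by (simp add: u'_def inv_into_f_f[OF inj])
  ultimately show ?thesis using fv_indep_iff[of "twv \<sigma> ` B"] fin x by blast
qed

lemma dim_twist:
  fixes S :: "(nat \<Rightarrow> 'a::field) set"
  assumes fe: "field_endo \<sigma>" and fin: "finite S"
  shows "fv.dim (twv \<sigma> ` S) = fv.dim S"
proof -
  obtain B where B: "B \<subseteq> S" "fv.independent B" "S \<subseteq> fv.span B" "card B = fv.dim S" "finite B"
    using fv_basis[OF fin] by blast
  have indT: "fv.independent (twv \<sigma> ` B)" using indep_twist[OF fe B(5) B(2)] .
  have inj: "inj (twv \<sigma>)" using twv_inj[OF fe] .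
  have "twv \<sigma> x \<in> fv.span (twv \<sigma> ` B)" if x: "x \<in> S" for x
  proof (cases "x \<in> B")
    case True then show ?thesis by (simp add: fv.span_base)
  next
    case False
    have "insert x B - {x} = B" using False by auto
    then have "x \<in> fv.span (insert x B - {x})" using B(3) x by auto
    then have "fv.dependent (insert x B)"
      unfolding fv.dependent_def by blast
    then have "fv.dependent (twv \<sigma> ` insert x B)" by (rule dep_twist[OF fe, rotated]) (use B(5) in simp)
    moreover have "twv \<sigma> x \<notin> twv \<sigma> ` B" using False inj by (simp add: inj_image_mem_iff)
    ultimately show ?thesis using indT fv.independent_insert[of "twv \<sigma> x" "twv \<sigma> ` B"] by auto
  qed
  then have sp: "twv \<sigma> ` S \<subseteq> fv.span (twv \<sigma> ` B)" by blast
  have "card (twv \<sigma> ` B) = fv.dim (twv \<sigma> ` S)"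
    using fv.basis_card_eq_dim[OF image_mono[OF B(1)] sp indT] .
  moreover have "card (twv \<sigma> ` B) = card B" by (rule card_image[OF inj_on_subset[OF inj subset_UNIV]])
  ultimately show ?thesis using B(4) by simp
qed

definition colv :: "(nat \<Rightarrow> nat \<Rightarrow> 'a::zero) \<Rightarrow> nat set \<Rightarrow> nat \<Rightarrow> nat \<Rightarrow> 'a" where
  "colv g R j = (\<lambda>i. if i \<in> R then g i j else 0)"

definition rk :: "(nat \<Rightarrow> nat \<Rightarrow> 'a::field) \<Rightarrow> nat set \<Rightarrow> nat set \<Rightarrow> nat" where
  "rk g R C = fv.dim (colv g R ` C)"

definition proj :: "nat set \<Rightarrow> (nat \<Rightarrow> 'a::zero) \<Rightarrow> nat \<Rightarrow> 'a" where
  "proj R f = (\<lambda>i. if i \<in> R then f i else 0)"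

lemma fv_linearI:
  fixes T :: "(nat \<Rightarrow> 'a::field) \<Rightarrow> nat \<Rightarrow> 'a"
  assumes "\<And>x y. T (x + y) = T x + T y" "\<And>c x. T (\<lambda>i. c * x i) = (\<lambda>i. c * T x i)"
  shows "Vector_Spaces.linear (\<lambda>c f i. c * f i) (\<lambda>c f i. c * f i) T"
  unfolding Vector_Spaces.linear_iff using assms fv.vector_space_axioms by blast

lemma proj_linear: "Vector_Spaces.linear (\<lambda>c f i. c * f i) (\<lambda>c f i. c * f i) (proj R :: (nat \<Rightarrow> 'a::field) \<Rightarrow> _)"
  by (rule fv_linearI) (auto simp: proj_def fun_eq_iff)

lemma colv_proj: "R \<subseteq> R' \<Longrightarrow> colv g R j = proj R (colv g R' j)"
  unfolding colv_def proj_def fun_eq_iff by auto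

lemma rk_cols_mono:
  assumes "C \<subseteq> C'" "finite C'"
  shows "rk g R C \<le> rk g R C'"
  unfolding rk_def
proof (rule fv_dim_mono)
  show "finite (colv g R ` C')" using assms by simp
  show "colv g R ` C \<subseteq> fv.span (colv g R ` C')"
    using image_mono[OF assms(1)] fv.span_superset by (rule subset_trans)
qed

lemma rk_rows_mono:
  assumes "R \<subseteq> R'" "finite C"
  shows "rk g R C \<le> rk g R' C"
proof -
  have "colv g R ` C = proj R ` (colv g R' ` C)"
    unfolding image_image by (rule image_cong[OF refl colv_proj[OF assms(1)]])
  then show ?thesis unfolding rk_def by (simp add: fv_dim_image_le[OF proj_linear] assms(2))
qed

lemma rk_rows_union:
  assumes "finite C"
  shows "rk g (R1 \<union> R2) C \<le> rk g R1 C + rk g R2 C"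
proof -
  have e: "colv g (R1 \<union> R2) j = colv g R1 j + colv g (R2 - R1) j" for j
    unfolding colv_def fun_eq_iff by auto
  have "colv g (R1 \<union> R2) ` C \<subseteq> fv.span (colv g R1 ` C \<union> colv g (R2 - R1) ` C)"
  proof
    fix x assume "x \<in> colv g (R1 \<union> R2) ` C"
    then obtain j where j: "j \<in> C" "x = colv g (R1 \<union> R2) j" by blast
    have "colv g R1 j \<in> fv.span (colv g R1 ` C \<union> colv g (R2 - R1) ` C)"
      using j(1) by (intro fv.span_base) blast
    moreover have "colv g (R2 - R1) j \<in> fv.span (colv g R1 ` C \<union> colv g (R2 - R1) ` C)"
      using j(1) by (intro fv.span_base) blast
    ultimately show "x \<in> fv.span (colv g R1 ` C \<union> colv g (R2 - R1) ` C)"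
      using j(2) e fv.span_add by metis
  qed
  then have "rk g (R1 \<union> R2) C \<le> fv.dim (colv g R1 ` C \<union> colv g (R2 - R1) ` C)"
    unfolding rk_def by (rule fv_dim_mono[rotated]) (use assms in simp)
  also have "\<dots> \<le> rk g R1 C + rk g (R2 - R1) C"
    unfolding rk_def by (rule fv_dim_union) (use assms in simp_all)
  also have "rk g (R2 - R1) C \<le> rk g R2 C" by (rule rk_rows_mono) (use assms in auto)
  finally show ?thesis by simp
qed

lemma rk_card_rows:
  assumes "finite R"
  shows "rk g R C \<le> card R"
proof -
  define ev :: "nat \<Rightarrow> nat \<Rightarrow> 'a" where "ev i = (\<lambda>k. if k = i then 1 else 0)" for i
  have "colv g R j \<in> fv.span (ev ` R)" for j
  proof -
    have "colv g R j = (\<Sum>i\<in>R. (\<lambda>k. g i j * ev i k))"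
      unfolding fun_eq_iff sum_fun_apply colv_def ev_def using assms
      by (simp add: if_distrib[of "\<lambda>x. _ * x"] cong: if_cong)
    also have "\<dots> \<in> fv.span (ev ` R)"
      by (intro fv.span_sum fv.span_scale fv.span_base) auto
    finally show ?thesis .
  qed
  then have "rk g R C \<le> card (ev ` R)"
    unfolding rk_def by (intro fv.dim_le_card) (use assms in auto)
  also have "\<dots> \<le> card R" using card_image_le assms by blast
  finally show ?thesis .
qed

lemma rk_card_cols:
  assumes "finite C"
  shows "rk g R C \<le> card C"
  unfolding rk_def using fv_dim_le_card[of "colv g R ` C"] card_image_le[OF assms, of "colv g R"] assms
  by simp

lemma rk_cols_union_card:
  assumes "finite C1" "finite C2"
  shows "rk g R (C1 \<union> C2) \<le> rk g R C1 + card C2"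
proof -
  have "rk g R (C1 \<union> C2) \<le> rk g R C1 + rk g R C2"
    unfolding rk_def image_Un by (rule fv_dim_union) (use assms in simp_all)
  then show ?thesis using rk_card_cols[OF assms(2), of g R] by simp
qed

lemma rk_F3:
  assumes "finite C0" "C \<subseteq> C0" "R \<subseteq> R0"
  shows "rk g R C0 + rk g R0 C \<le> rk g R0 C0 + rk g R C"
proof -
  have e: "colv g R ` X = proj R ` (colv g R0 ` X)" for X
    unfolding image_image by (rule image_cong[OF refl colv_proj[OF assms(3)]])
  show ?thesis unfolding rk_def e
    by (rule fv_F3[OF proj_linear]) (use assms in auto)
qed

lemma rk_zero_cols:
  assumes "\<forall>j\<in>C2. \<forall>i\<in>R. g i j = 0" "finite C" "finite C2"
  shows "rk g R (C \<union> C2) = rk g R C"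
proof (rule antisym)
  show "rk g R C \<le> rk g R (C \<union> C2)" by (rule rk_cols_mono) (use assms in auto)
  have "colv g R ` (C \<union> C2) \<subseteq> fv.span (colv g R ` C)"
  proof
    fix x assume "x \<in> colv g R ` (C \<union> C2)"
    then obtain j where j: "j \<in> C \<union> C2" "x = colv g R j" by blast
    show "x \<in> fv.span (colv g R ` C)"
    proof (cases "j \<in> C")
      case True then show ?thesis using j by (simp add: fv.span_base)
    next
      case False
      then have "x = 0" using j assms(1) unfolding colv_def fun_eq_iff by auto
      then show ?thesis using fv.span_zero by simp
    qed
  qed
  then show "rk g R (C \<union> C2) \<le> rk g R C"
    unfolding rk_def by (rule fv_dim_mono[rotated]) (use assms in simp)
qed

lemma rk_cong:
  assumes "\<forall>i\<in>R. \<forall>j\<in>C. g i j = g' i j"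
  shows "rk g R C = rk g' R C"
proof -
  have "colv g R ` C = colv g' R ` C"
    by (rule image_cong) (use assms in \<open>auto simp: colv_def fun_eq_iff\<close>)
  then show ?thesis unfolding rk_def by simp
qed

lemma rk_zero_rows:
  assumes "\<forall>i\<in>R2. \<forall>j\<in>C. g i j = 0"
  shows "rk g (R \<union> R2) C = rk g R C"
proof -
  have "colv g (R \<union> R2) ` C = colv g R ` C"
    by (rule image_cong) (use assms in \<open>auto simp: colv_def fun_eq_iff\<close>)
  then show ?thesis unfolding rk_def by simp
qed

lemma rk_twist:
  fixes g :: "nat \<Rightarrow> nat \<Rightarrow> 'a::field"
  assumes fe: "field_endo \<sigma>" and "finite C"
  shows "rk (\<lambda>i j. \<sigma> (g i j)) R C = rk g R C"
proof -
  have "colv (\<lambda>i j. \<sigma> (g i j)) R ` C = twv \<sigma> ` (colv g R ` C)"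
    by (auto simp: colv_def twv_def fun_eq_iff fe_0[OF fe] image_image intro!: image_cong)
  then show ?thesis unfolding rk_def using dim_twist[OF fe] assms(2) by simp
qed

lemma rk_shift:
  fixes g :: "nat \<Rightarrow> nat \<Rightarrow> 'a::field"
  assumes "finite C"
  shows "rk (\<lambda>i j. g (i + a) (j + b)) R C = rk g ((\<lambda>i. i + a) ` R) ((\<lambda>j. j + b) ` C)"
proof -
  define R' where "R' = (\<lambda>i. i + a) ` R"
  define T :: "(nat \<Rightarrow> 'a) \<Rightarrow> nat \<Rightarrow> 'a" where "T f = (\<lambda>i. if i \<in> R then f (i + a) else 0)" for f
  have lin: "Vector_Spaces.linear (\<lambda>c f i. c * f i) (\<lambda>c f i. c * f i) T"
    by (rule fv_linearI) (auto simp: T_def fun_eq_iff)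
  have e: "colv (\<lambda>i j. g (i + a) (j + b)) R ` C = T ` (colv g R' ` ((\<lambda>j. j + b) ` C))"
    unfolding image_image
    by (rule image_cong) (auto simp: colv_def T_def R'_def fun_eq_iff)
  define Z where "Z = {f :: nat \<Rightarrow> 'a. \<forall>i. i \<notin> R' \<longrightarrow> f i = 0}"
  have subZ: "fv.subspace Z"
    unfolding fv.subspace_def Z_def by auto
  have "colv g R' ` ((\<lambda>j. j + b) ` C) \<subseteq> Z" unfolding Z_def colv_def by auto
  then have spZ: "fv.span (colv g R' ` ((\<lambda>j. j + b) ` C)) \<subseteq> Z"
    using fv.span_minimal subZ by blast
  have injZ: "inj_on T Z"
  proof
    fix f h assume f: "f \<in> Z" and h: "h \<in> Z" and eq: "T f = T h"
    show "f = h"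
    proof
      fix i show "f i = h i"
      proof (cases "i \<in> R'")
        case True
        then obtain k where k: "k \<in> R" "i = k + a" unfolding R'_def by blast
        have "T f k = T h k" using eq by simp
        then show ?thesis using k unfolding T_def by simp
      next
        case False then show ?thesis using f h unfolding Z_def by simp
      qed
    qed
  qed
  show ?thesis unfolding rk_def e R'_def[symmetric]
    by (rule fv_dim_image_eq[OF lin]) (use assms inj_on_subset[OF injZ spZ] in simp_all)
qed

lemma seq_main:
  fixes f :: "nat \<Rightarrow> nat" and t m :: nat
  assumes f0: "f 0 = 0"
    and mono: "\<And>k. f k \<le> f (Suc k)"
    and conv: "\<And>k. f (Suc k) + f (Suc k) \<le> f (Suc (Suc k)) + f k"
    and bd: "\<And>k. f (Suc k) \<le> f k + m"
    and sub: "\<And>a b. f (a + b) \<le> f a + f (b + (t - 1))"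
  shows "\<exists>d::nat. \<exists>a::int. \<exists>k0. k0 \<le> (t - 1) * m \<and> (\<forall>k\<ge>k0. int (f k) = int d * int k + a)"
proof -
  define \<delta> where "\<delta> k = f (Suc k) - f k" for k
  have fS: "f (Suc k) = f k + \<delta> k" for k using mono[of k] unfolding \<delta>_def by simp
  have dmono1: "\<delta> k \<le> \<delta> (Suc k)" for k using conv[of k] fS[of k] fS[of "Suc k"] by simp
  have dmono: "j \<le> k \<Longrightarrow> \<delta> j \<le> \<delta> k" for j k
    by (rule lift_Suc_mono_le[of \<delta>, OF dmono1])
  have dbd: "\<delta> k \<le> m" for k using bd[of k] fS[of k] by simp
  define d where "d = Max (range \<delta>)"
  have "range \<delta> \<subseteq> {..m}" using dbd by blast
  then have fin: "finite (range \<delta>)" by (rule finite_subset) simp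
  have "d \<in> range \<delta>" unfolding d_def by (rule Max_in[OF fin]) simp
  then obtain K where K: "\<delta> K = d" by auto
  have dle: "\<delta> k \<le> d" for k unfolding d_def by (rule Max_ge[OF fin]) simp
  define J where "J = (LEAST j. \<delta> j = d)"
  have J: "\<delta> J = d" unfolding J_def using K by (rule LeastI)
  have JK: "J \<le> K" unfolding J_def using K by (rule Least_le)
  have after: "\<delta> k = d" if "J \<le> k" for k using dmono[OF that] J dle[of k] by simp
  have before: "\<delta> j < d" if "j < J" for j
    using not_less_Least[of j "\<lambda>j. \<delta> j = d"] that dle[of j] unfolding J_def by fastforce
  have flin: "f k = f J + d * (k - J)" if "J \<le> k" for k
    using that
  proof (induction k rule: dec_induct)
    case base then show ?case by simp
  next
    case (step k) then show ?case using fS[of k] after[of k] by (simp add: Suc_diff_le)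
  qed
  have flinK: "f k = f K + d * (k - K)" if "K \<le> k" for k
    using that
  proof (induction k rule: dec_induct)
    case base then show ?case by simp
  next
    case (step k) then show ?case using fS[of k] after[of k] JK by (simp add: Suc_diff_le)
  qed
  have flow: "j \<le> J \<Longrightarrow> f j + j \<le> d * j" for j
  proof (induction j)
    case 0 then show ?case using f0 by simp
  next
    case (Suc j)
    then have "\<delta> j + 1 \<le> d" using before[of j] by simp
    then show ?case using Suc fS[of j] by simp
  qed
  have subit: "f (n * s) \<le> n * f (s + (t - 1))" for n s
  proof (induction n)
    case 0 then show ?case using f0 by simp
  next
    case (Suc n)
    have "f (Suc n * s) = f (n * s + s)" by (simp add: add.commute)
    also have "\<dots> \<le> f (n * s) + f (s + (t - 1))" by (rule sub)
    finally show ?case using Suc by simp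
  qed
  have lower: "d * s \<le> f (s + (t - 1))" if s: "s \<ge> 1" for s
  proof (rule ccontr)
    define X where "X = f (s + (t - 1))"
    assume "\<not> d * s \<le> f (s + (t - 1))"
    then have X: "X + 1 \<le> d * s" unfolding X_def by simp
    then have d1: "d \<ge> 1" by (cases d) auto
    define n where "n = d * K + 1"
    have nK: "K \<le> n * s"
    proof -
      have "K \<le> d * K" using d1 by simp
      also have "\<dots> < n" unfolding n_def by simp
      also have "n \<le> n * s" using s by simp
      finally show ?thesis by simp
    qed
    have "f (n * s) = f K + d * (n * s - K)" using flinK[OF nK] .
    then have A: "d * (n * s) \<le> f (n * s) + d * K"
      using nK by (simp add: diff_mult_distrib2)
    have B: "f (n * s) \<le> n * X" unfolding X_def by (rule subit)
    have C: "n * X + n \<le> n * (d * s)" using mult_le_mono2[OF X, of n] by (simp add: algebra_simps)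
    have "n * (d * s) = d * (n * s)" by (simp add: algebra_simps)
    then have "n \<le> d * K" using A B C by linarith
    then show False unfolding n_def by simp
  qed
  have lowall: "d * k \<le> f k + d * (t - 1)" for k
  proof (cases "k \<le> t - 1")
    case True then show ?thesis by (simp add: mult_le_mono2 trans_le_add2)
  next
    case False
    define s where "s = k - (t - 1)"
    have ks: "k = s + (t - 1)" and s1: "s \<ge> 1" using False unfolding s_def by auto
    have "d * k = d * s + d * (t - 1)" using ks by (simp add: algebra_simps)
    then show ?thesis using lower[OF s1] ks by simp
  qed
  have "f J + J \<le> f J + d * (t - 1)" using flow[of J] lowall[of J] by simp
  then have Jd: "J \<le> d * (t - 1)" by simp
  have "d \<le> m" using K dbd[of K] by simp
  then have "d * (t - 1) \<le> m * (t - 1)" by (rule mult_le_mono1)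
  then have Jb0: "J \<le> m * (t - 1)" using Jd by (rule le_trans[rotated])
  have Jb: "J \<le> (t - 1) * m" using Jb0 by (simp only: mult.commute)
  define a where "a = int (f J) - int d * int J"
  have "\<forall>k\<ge>J. int (f k) = int d * int k + a"
  proof (intro allI impI)
    fix k assume "J \<le> k"
    then have "f k = f J + d * (k - J)" by (rule flin)
    then have "int (f k) = int (f J) + int d * int (k - J)" by simp
    moreover have "int (k - J) = int k - int J" using \<open>J \<le> k\<close> by simp
    ultimately show "int (f k) = int d * int k + a" unfolding a_def by (simp add: algebra_simps)
  qed
  then show ?thesis using Jb by blast
qed

definition vtf :: "nat \<Rightarrow> 'a::zero vec \<Rightarrow> nat \<Rightarrow> 'a" where
  "vtf n v = (\<lambda>i. if i < n then v $ i else 0)"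

lemma vtf_inj: "inj_on (vtf n) (carrier_vec n)"
proof
  fix x y assume x: "x \<in> carrier_vec n" and y: "y \<in> carrier_vec n" and e: "vtf n x = vtf n y"
  show "x = y"
  proof (rule eq_vecI)
    show "dim_vec x = dim_vec y" using x y by simp
    fix i assume "i < dim_vec y"
    then have "i < n" using y by simp
    then show "x $ i = y $ i" using fun_cong[OF e, of i] unfolding vtf_def by simp
  qed
qed

lemma (in vec_space) lin_dep_fv:
  assumes T: "T \<subseteq> carrier_vec n" and fin: "finite T"
  shows "lin_dep T \<longleftrightarrow> fv.dependent (vtf n ` T)"
proof
  assume "lin_dep T"
  then obtain A a v where A: "finite A" "A \<subseteq> T" "lincomb a A = 0\<^sub>v n" "v \<in> A" "a v \<noteq> 0"
    unfolding lin_dep_def by auto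
  have AC: "A \<subseteq> carrier_vec n" using A(2) T by blast
  have inj: "inj_on (vtf n) A" using inj_on_subset[OF vtf_inj AC] .
  define u where "u y = a (inv_into A (vtf n) y)" for y
  have H: "(\<Sum>y\<in>vtf n ` A. u y * y i) = 0" for i
  proof -
    have "(\<Sum>y\<in>vtf n ` A. u y * y i) = (\<Sum>x\<in>A. u (vtf n x) * vtf n x i)"
      using sum.reindex[OF inj, of "\<lambda>y. u y * y i"] by simp
    also have "\<dots> = (\<Sum>x\<in>A. a x * vtf n x i)"
      by (rule sum.cong[OF refl]) (simp add: u_def inv_into_f_f[OF inj])
    also have "\<dots> = 0"
    proof (cases "i < n")
      case True
      have "(\<Sum>x\<in>A. a x * vtf n x i) = (\<Sum>x\<in>A. a x * x $ i)"
        using True by (simp add: vtf_def)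
      also have "\<dots> = lincomb a A $ i" using lincomb_index[OF True AC] by simp
      finally show ?thesis using A(3) True by simp
    next
      case False then show ?thesis by (simp add: vtf_def)
    qed
    finally show ?thesis .
  qed
  have nz: "u (vtf n v) \<noteq> 0" using A(4,5) by (simp add: u_def inv_into_f_f[OF inj])
  have finA: "finite (vtf n ` A)" using A(1) by simp
  have "\<not> fv.independent (vtf n ` A)"
  proof
    assume "fv.independent (vtf n ` A)"
    then have "\<forall>u. (\<forall>i. (\<Sum>x\<in>vtf n ` A. u x * x i) = 0) \<longrightarrow> (\<forall>x\<in>vtf n ` A. u x = 0)"
      by (simp only: fv_indep_iff[OF finA])
    then have "\<forall>x\<in>vtf n ` A. u x = 0" using H by blast
    then have "u (vtf n v) = 0" using imageI[OF A(4), of "vtf n"] by (rule bspec)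
    then show False using nz by simp
  qed
  then have "fv.dependent (vtf n ` A)" by simp
  then show "fv.dependent (vtf n ` T)" by (rule fv.dependent_mono[OF _ image_mono[OF A(2)]])
next
  assume dep: "fv.dependent (vtf n ` T)"
  have inj: "inj_on (vtf n) T" using inj_on_subset[OF vtf_inj T] .
  obtain u y where y: "y \<in> vtf n ` T" "u y \<noteq> 0" and H: "\<forall>i. (\<Sum>y\<in>vtf n ` T. u y * y i) = 0"
    using dep fv_indep_iff[of "vtf n ` T"] fin by auto
  obtain v where v: "v \<in> T" "y = vtf n v" using y(1) by blast
  define a where "a x = u (vtf n x)" for x
  have "lincomb a T = 0\<^sub>v n"
  proof (rule eq_vecI)
    show "dim_vec (lincomb a T) = dim_vec (0\<^sub>v n)" using lincomb_dim[OF fin T] by simp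
    fix i assume "i < dim_vec (0\<^sub>v n)"
    then have i: "i < n" by simp
    have "lincomb a T $ i = (\<Sum>x\<in>T. a x * x $ i)" using lincomb_index[OF i T] by simp
    also have "\<dots> = (\<Sum>x\<in>T. u (vtf n x) * vtf n x i)"
      by (rule sum.cong[OF refl]) (simp add: a_def vtf_def i)
    also have "\<dots> = (\<Sum>y\<in>vtf n ` T. u y * y i)"
      using sum.reindex[OF inj, of "\<lambda>y. u y * y i"] by simp
    finally show "lincomb a T $ i = 0\<^sub>v n $ i" using H i by simp
  qed
  moreover have "a v \<noteq> 0" using v y(2) by (simp add: a_def)
  ultimately show "lin_dep T" unfolding lin_dep_def using fin v(1)
    by (intro exI[of _ T] exI[of _ a] exI[of _ v]) auto
qed

lemma mat_rank_rk:
  fixes A :: "'a::field mat"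
  assumes A: "A \<in> carrier_mat n m"
  shows "mat_rank A = rk (\<lambda>i j. A $$ (i, j)) {..<n} {..<m}"
proof -
  interpret vs: vec_space "TYPE('a)" n .
  define S where "S = set (cols A)"
  have SC: "S \<subseteq> carrier_vec n" unfolding S_def using A cols_dim by blast
  have finS: "finite S" unfolding S_def by simp
  have img: "vtf n ` S = colv (\<lambda>i j. A $$ (i, j)) {..<n} ` {..<m}"
  proof -
    have "S = col A ` {..<m}" unfolding S_def using A by (auto simp: cols_def)
    then show ?thesis
      by (auto simp: image_image vtf_def colv_def fun_eq_iff intro!: image_cong) (use A in auto)
  qed
  obtain B where B: "B \<subseteq> vtf n ` S" "fv.independent B" "vtf n ` S \<subseteq> fv.span B"
    using fv.maximal_independent_subset by blast
  define U where "U = {x \<in> S. vtf n x \<in> B}"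
  have US: "U \<subseteq> S" unfolding U_def by blast
  have UB: "vtf n ` U = B" unfolding U_def using B(1) by blast
  have injS: "inj_on (vtf n) S" using inj_on_subset[OF vtf_inj SC] .
  have cardU: "card U = card B" using card_image[OF inj_on_subset[OF injS US]] UB by simp
  have finU: "finite U" using finite_subset[OF US finS] .
  have indU: "vs.lin_indpt U" using vs.lin_dep_fv[of U] US SC finU UB B(2) by auto
  have max: "maximal U (\<lambda>T. T \<subseteq> set (cols A) \<and> vs.lin_indpt T)"
    unfolding maximal_def
  proof (intro conjI allI impI)
    show "U \<subseteq> set (cols A)" using US unfolding S_def .
    show "vs.lin_indpt U" by (rule indU)
    fix T assume T: "U \<subseteq> T \<and> T \<subseteq> set (cols A) \<and> vs.lin_indpt T"
    show "T = U"
    proof (rule ccontr)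
      assume "T \<noteq> U"
      then obtain x where x: "x \<in> T" "x \<notin> U" using T by blast
      have xS: "x \<in> S" using x T unfolding S_def by blast
      have nB: "vtf n x \<notin> B" using x xS unfolding U_def by blast
      have "vtf n x \<in> fv.span B" using B(3) xS by blast
      then have "fv.dependent (insert (vtf n x) B)" using fv.independent_insert[of "vtf n x" B] nB by simp
      moreover have "insert (vtf n x) B \<subseteq> vtf n ` T" using x(1) T UB by blast
      ultimately have "fv.dependent (vtf n ` T)" by (rule fv.dependent_mono)
      moreover have "finite T" using T finite_subset unfolding S_def by blast
      ultimately have "vs.lin_dep T" using vs.lin_dep_fv[of T] T SC unfolding S_def by blast
      then show False using T by blast
    qed
  qed
  have "vs.rank A = card U" using vs.rank_card_indpt[OF A max] .
  also have "\<dots> = fv.dim (vtf n ` S)"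
    using cardU fv.basis_card_eq_dim[OF B(1) B(3) B(2)] by simp
  finally show ?thesis unfolding mat_rank_def rk_def using A img by simp
qed

definition NN :: "('a::field \<Rightarrow> 'a) \<Rightarrow> (nat \<Rightarrow> 'a mat) \<Rightarrow> nat \<Rightarrow> nat \<Rightarrow> nat \<Rightarrow> nat \<Rightarrow> nat \<Rightarrow> 'a" where
  "NN \<sigma> E t p q i j = (let a = i div p; b = j div q in
      if b \<le> a \<and> a - b \<le> t - 1 then (\<sigma> ^^ a) (E (a - b + 1) $$ (i mod p, j mod q)) else 0)"

locale NS =
  fixes \<sigma> :: "'a::field \<Rightarrow> 'a" and E :: "nat \<Rightarrow> 'a mat" and t p q :: nat
  assumes fe: "field_endo \<sigma>" and t1: "t \<ge> 1"
    and Ec: "\<And>i. i \<in> {1..t} \<Longrightarrow> E i \<in> carrier_mat p q"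
    and pp: "p > 0" and qp: "q > 0"
begin

abbreviation "G \<equiv> NN \<sigma> E t p q"

definition r where "r k = rk G {..<k*p} {..<k*q}"

lemma divp: "x * p \<le> i \<Longrightarrow> x \<le> i div p"
  using div_less_iff_less_mult[OF pp, of i x] by linarith
lemma divp': "i < y * p \<Longrightarrow> i div p < y"
  using div_less_iff_less_mult[OF pp] by blast
lemma divq: "x * q \<le> i \<Longrightarrow> x \<le> i div q"
  using div_less_iff_less_mult[OF qp, of i x] by linarith
lemma divq': "i < y * q \<Longrightarrow> i div q < y"
  using div_less_iff_less_mult[OF qp] by blast

lemma G_zero_above: "i div p < j div q \<Longrightarrow> G i j = 0"
  unfolding NN_def Let_def by auto

lemma G_zero_far: "j div q + t \<le> i div p \<Longrightarrow> G i j = 0"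
  unfolding NN_def Let_def using t1 by auto

lemma G_shift: "G (i + s * p) (j + s * q) = (\<sigma> ^^ s) (G i j)"
proof -
  have d1: "(i + s * p) div p = i div p + s" using pp by simp
  have d2: "(j + s * q) div q = j div q + s" using qp by simp
  have m1: "(i + s * p) mod p = i mod p" by simp
  have m2: "(j + s * q) mod q = j mod q" by simp
  have pw: "(\<sigma> ^^ (i div p + s)) x = (\<sigma> ^^ s) ((\<sigma> ^^ (i div p)) x)" for x
    by (simp add: funpow_add add.commute[of "i div p" s])
  show ?thesis
    unfolding NN_def Let_def d1 d2 m1 m2
    using fe_0[OF fe_pow[OF fe, of s]] by (auto simp: pw)
qed

lemma rk_shift_blk:
  assumes "finite C"
  shows "rk G ((\<lambda>i. i + s * p) ` R) ((\<lambda>j. j + s * q) ` C) = rk G R C"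
proof -
  have "rk G ((\<lambda>i. i + s * p) ` R) ((\<lambda>j. j + s * q) ` C) = rk (\<lambda>i j. G (i + s * p) (j + s * q)) R C"
    by (rule rk_shift[symmetric]) (rule assms)
  also have "\<dots> = rk (\<lambda>i j. (\<sigma> ^^ s) (G i j)) R C" by (simp only: G_shift)
  also have "\<dots> = rk G R C" by (rule rk_twist[OF fe_pow[OF fe] assms])
  finally show ?thesis .
qed

lemma rk_shift_int:
  "rk G {x + s * p..<y + s * p} {u + s * q..<v + s * q} = rk G {x..<y} {u..<v}"
  using rk_shift_blk[of "{u..<v}" s "{x..<y}"] by simp

lemma Lzc: "a \<le> c \<Longrightarrow> rk G {..<a*p} {..<c*q} = r a"
proof -
  assume ac: "a \<le> c"
  have aq: "a*q \<le> c*q" using ac by (rule mult_le_mono1)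
  have e: "{..<c*q} = {..<a*q} \<union> {a*q..<c*q}" by (auto dest: less_le_trans[OF _ aq])
  have z: "\<forall>j\<in>{a*q..<c*q}. \<forall>i\<in>{..<a*p}. G i j = 0"
  proof (intro ballI)
    fix j i assume j: "j \<in> {a*q..<c*q}" and i: "i \<in> {..<a*p}"
    have "i div p < a" using i divp' by simp
    moreover have "a \<le> j div q" using j divq by simp
    ultimately show "G i j = 0" by (intro G_zero_above) simp
  qed
  show ?thesis unfolding r_def e by (rule rk_zero_cols[OF z]) simp_all
qed

lemma Lsc: "rk G {..<Suc k * p} {q..<Suc k * q} = r k"
proof -
  have e: "{..<Suc k * p} = {p..<Suc k * p} \<union> {..<p}" by auto
  have z: "\<forall>i\<in>{..<p}. \<forall>j\<in>{q..<Suc k * q}. G i j = 0"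
  proof (intro ballI)
    fix i j assume i: "i \<in> {..<p}" and j: "j \<in> {q..<Suc k * q}"
    have "i div p = 0" using i by simp
    moreover have "1 \<le> j div q" using j divq[of 1 j] by simp
    ultimately show "G i j = 0" by (intro G_zero_above) simp
  qed
  have "rk G {..<Suc k * p} {q..<Suc k * q} = rk G {p..<Suc k * p} {q..<Suc k * q}"
    unfolding e by (rule rk_zero_rows[OF z])
  also have "\<dots> = rk G {0 + 1 * p..<k * p + 1 * p} {0 + 1 * q..<k * q + 1 * q}" by (simp add: add.commute)
  also have "\<dots> = rk G {0..<k * p} {0..<k * q}" by (rule rk_shift_int)
  also have "\<dots> = r k" unfolding r_def by (simp add: atLeast0LessThan)
  finally show ?thesis .
qed

lemma r0: "r 0 = 0"
  unfolding r_def rk_def using fv_dim_le_card[of "{} :: (nat \<Rightarrow> 'a) set"] by simp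

lemma rmono1: "r k \<le> r (Suc k)"
proof -
  have "r k = rk G {..<k*p} {..<Suc k*q}" using Lzc[of k "Suc k"] by simp
  also have "\<dots> \<le> rk G {..<Suc k*p} {..<Suc k*q}" by (rule rk_rows_mono) auto
  finally show ?thesis unfolding r_def .
qed

lemma rmono: "k \<le> k' \<Longrightarrow> r k \<le> r k'"
  by (rule lift_Suc_mono_le[of r, OF rmono1])

lemma rconv: "r (Suc k) + r (Suc k) \<le> r (Suc (Suc k)) + r k"
proof -
  define K where "K = Suc k"
  have F: "rk G {..<K*p} {..<Suc K*q} + rk G {..<Suc K*p} {q..<Suc K*q}
        \<le> rk G {..<Suc K*p} {..<Suc K*q} + rk G {..<K*p} {q..<Suc K*q}"
    by (rule rk_F3) auto
  have a: "rk G {..<K*p} {..<Suc K*q} = r K" by (rule Lzc) simp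
  have b: "rk G {..<Suc K*p} {q..<Suc K*q} = r K" by (rule Lsc)
  have c: "rk G {..<Suc K*p} {..<Suc K*q} = r (Suc K)" unfolding r_def ..
  have d: "rk G {..<K*p} {q..<Suc K*q} = r k"
  proof -
    have e: "{q..<Suc K*q} = {q..<K*q} \<union> {K*q..<Suc K*q}" by (auto simp: K_def)
    have z: "\<forall>j\<in>{K*q..<Suc K*q}. \<forall>i\<in>{..<K*p}. G i j = 0"
    proof (intro ballI)
      fix j i assume j: "j \<in> {K*q..<Suc K*q}" and i: "i \<in> {..<K*p}"
      have "i div p < K" using i divp' by simp
      moreover have "K \<le> j div q" using j divq by simp
      ultimately show "G i j = 0" by (intro G_zero_above) simp
    qed
    have "rk G {..<K*p} {q..<Suc K*q} = rk G {..<K*p} {q..<K*q}"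
      unfolding e by (rule rk_zero_cols[OF z]) simp_all
    also have "\<dots> = r k" unfolding K_def by (rule Lsc)
    finally show ?thesis .
  qed
  show ?thesis using F a b c d unfolding K_def by simp
qed

lemma rbdp: "r (Suc k) \<le> r k + p"
proof -
  have e: "{..<Suc k * p} = {..<k*p} \<union> {k*p..<Suc k * p}" by auto
  have "r (Suc k) \<le> rk G {..<k*p} {..<Suc k*q} + rk G {k*p..<Suc k * p} {..<Suc k*q}"
    unfolding r_def e by (rule rk_rows_union) simp
  also have "rk G {..<k*p} {..<Suc k*q} = r k" by (rule Lzc) simp
  also have "rk G {k*p..<Suc k * p} {..<Suc k*q} \<le> card {k*p..<Suc k * p}" by (rule rk_card_rows) simp
  finally show ?thesis by simp
qed

lemma rbdq: "r (Suc k) \<le> r k + q"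
proof -
  have e: "{..<Suc k * q} = {q..<Suc k*q} \<union> {..<q}" by auto
  have "r (Suc k) \<le> rk G {..<Suc k*p} {q..<Suc k*q} + card {..<q}"
    unfolding r_def e by (rule rk_cols_union_card) simp_all
  then show ?thesis using Lsc[of k] by simp
qed

lemma rsub: "r (a + b) \<le> r a + r (b + (t - 1))"
proof -
  have e: "{..<(a+b)*p} = {..<a*p} \<union> {a*p..<(a+b)*p}" by (auto simp: algebra_simps)
  have "r (a + b) \<le> rk G {..<a*p} {..<(a+b)*q} + rk G {a*p..<(a+b)*p} {..<(a+b)*q}"
    unfolding r_def e by (rule rk_rows_union) simp
  also have "rk G {..<a*p} {..<(a+b)*q} = r a" by (rule Lzc) simp
  also have "rk G {a*p..<(a+b)*p} {..<(a+b)*q} \<le> r (b + (t - 1))"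
  proof (cases "a \<le> t - 1")
    case True
    have "rk G {a*p..<(a+b)*p} {..<(a+b)*q} \<le> rk G {..<(a+b)*p} {..<(a+b)*q}"
      by (rule rk_rows_mono) auto
    also have "\<dots> = r (a + b)" unfolding r_def ..
    also have "\<dots> \<le> r (b + (t - 1))" by (rule rmono) (use True in simp)
    finally show ?thesis .
  next
    case False
    define s where "s = a - (t - 1)"
    have as: "a = s + (t - 1)" using False unfolding s_def by simp
    have ec: "{..<(a+b)*q} = {s*q..<(a+b)*q} \<union> {..<s*q}" using as by (auto simp: algebra_simps)
    have z: "\<forall>j\<in>{..<s*q}. \<forall>i\<in>{a*p..<(a+b)*p}. G i j = 0"
    proof (intro ballI)
      fix j i assume j: "j \<in> {..<s*q}" and i: "i \<in> {a*p..<(a+b)*p}"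
      have "j div q < s" using j divq' by simp
      moreover have "a \<le> i div p" using i divp by simp
      ultimately show "G i j = 0" using as t1 by (intro G_zero_far) simp
    qed
    have "rk G {a*p..<(a+b)*p} {..<(a+b)*q} = rk G {a*p..<(a+b)*p} {s*q..<(a+b)*q}"
      unfolding ec by (rule rk_zero_cols[OF z]) simp_all
    also have "\<dots> = rk G {(t-1)*p + s*p..<(b + (t-1))*p + s*p} {0 + s*q..<(b + (t-1))*q + s*q}"
      using as by (simp add: algebra_simps)
    also have "\<dots> = rk G {(t-1)*p..<(b + (t-1))*p} {0..<(b + (t-1))*q}" by (rule rk_shift_int)
    also have "\<dots> \<le> rk G {..<(b + (t-1))*p} {0..<(b + (t-1))*q}" by (rule rk_rows_mono) auto
    also have "\<dots> = r (b + (t - 1))" unfolding r_def by (simp add: atLeast0LessThan)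
    finally show ?thesis .
  qed
  finally show ?thesis by simp
qed

lemma main_r: "\<exists>d::nat. \<exists>a::int. \<exists>k0. k0 \<le> (t - 1) * min p q \<and> (\<forall>k\<ge>k0. int (r k) = int d * int k + a)"
proof (rule seq_main)
  show "r 0 = 0" by (rule r0)
  show "r k \<le> r (Suc k)" for k by (rule rmono1)
  show "r (Suc k) + r (Suc k) \<le> r (Suc (Suc k)) + r k" for k by (rule rconv)
  show "r (Suc k) \<le> r k + min p q" for k using rbdp[of k] rbdq[of k] by simp
  show "r (a + b) \<le> r a + r (b + (t - 1))" for a b by (rule rsub)
qed

lemma Nmat_r: "mat_rank (Nmat \<sigma> E t p q k) = r k"
proof -
  have A: "Nmat \<sigma> E t p q k \<in> carrier_mat (k*p) (k*q)" unfolding Nmat_def by simp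
  have "mat_rank (Nmat \<sigma> E t p q k) = rk (\<lambda>i j. Nmat \<sigma> E t p q k $$ (i, j)) {..<k*p} {..<k*q}"
    by (rule mat_rank_rk[OF A])
  also have "\<dots> = rk G {..<k*p} {..<k*q}"
  proof (rule rk_cong, intro ballI)
    fix i j assume i: "i \<in> {..<k*p}" and j: "j \<in> {..<k*q}"
    show "Nmat \<sigma> E t p q k $$ (i, j) = G i j"
    proof (cases "j div q \<le> i div p \<and> i div p - j div q \<le> t - 1")
      case True
      then have "i div p - j div q + 1 \<in> {1..t}" using t1 by auto
      then have EC: "E (i div p - j div q + 1) \<in> carrier_mat p q" by (rule Ec)
      have "i mod p < p" "j mod q < q" using pp qp by simp_all
      then show ?thesis using i j True EC
        unfolding Nmat_def NN_def Let_def twist_def by simp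
    next
      case False
      then show ?thesis using i j unfolding Nmat_def NN_def Let_def by auto
    qed
  qed
  finally show ?thesis unfolding r_def .
qed

end

theorem mainTheorem6:
  fixes \<sigma> :: "'a::field \<Rightarrow> 'a" and E :: "nat \<Rightarrow> 'a mat" and t p q :: nat
  assumes "field_endo \<sigma>"
    and "t \<ge> 1"
    and "\<And>i. i \<in> {1..t} \<Longrightarrow> E i \<in> carrier_mat p q"
  shows "\<exists>(d::nat) (a::int). \<exists>k0. k0 \<le> (t - 1) * (min p q + 2) \<and>
           (\<forall>k\<ge>k0. k \<ge> 1 \<longrightarrow> int (mat_rank (Nmat \<sigma> E t p q k)) = int d * int k + a)"
proof (cases "p = 0 \<or> q = 0")
  case True
  have "mat_rank (Nmat \<sigma> E t p q k) = 0" for k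
  proof -
    have A: "Nmat \<sigma> E t p q k \<in> carrier_mat (k*p) (k*q)" unfolding Nmat_def by simp
    have "mat_rank (Nmat \<sigma> E t p q k) = rk (\<lambda>i j. Nmat \<sigma> E t p q k $$ (i, j)) {..<k*p} {..<k*q}"
      by (rule mat_rank_rk[OF A])
    also have "\<dots> = 0"
    proof (cases "p = 0")
      case True
      then show ?thesis using rk_card_rows[of "{..<k*p}" "\<lambda>i j. Nmat \<sigma> E t p q k $$ (i, j)" "{..<k*q}"] by simp
    next
      case False
      then have "q = 0" using \<open>p = 0 \<or> q = 0\<close> by simp
      then show ?thesis using rk_card_cols[of "{..<k*q}" "\<lambda>i j. Nmat \<sigma> E t p q k $$ (i, j)" "{..<k*p}"] by simp
    qed
    finally show ?thesis .
  qed
  then show ?thesis by (intro exI[of _ 0]) simp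
next
  case False
  interpret NS \<sigma> E t p q using assms False by unfold_locales auto
  obtain d a k0 where k0: "k0 \<le> (t - 1) * min p q" and H: "\<forall>k\<ge>k0. int (r k) = int d * int k + a"
    using main_r by blast
  have "(t - 1) * min p q \<le> (t - 1) * (min p q + 2)" by simp
  then have "k0 \<le> (t - 1) * (min p q + 2)" using k0 by (rule le_trans[rotated])
  then show ?thesis using H Nmat_r by (intro exI[of _ d] exI[of _ a] exI[of _ k0]) simp
qed

end
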